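(* (i) Let $K = K(L)$ be positive integers with $\lim_{L\to\infty} K/L = \kappa > 0$. Then $$\lim_{L\to\infty} \frac{1}{L} H(\mathsf{BF}(L,K)) = h_2(e^{-\kappa}).$$ (ii) Let $K_1 = K_1(L)$, $K_2 = K_2(L)$ be positive integers with $\lim_{L\to\infty} K_i/L = \kappa_i > 0$, $i=1,2$. Let $\underline{x}_1 \sim \mathsf{BF}(L,K_1)$ and $\underline{x}_2 \sim \mathsf{BF}(L,K_2)$ be independent. Then $$\lim_{L\to\infty} \frac{1}{L} H(\underline{x}_1 \vee \underline{x}_2 \mid \underline{x}_1) = e^{-\kappa_1} h_2(e^{-\kappa_2}),$$ where $\vee$ denotes componentwise Boolean OR.
   Context: A Bloom filter $\mathsf{BF}(L, K)$ is the random binary array in $\{0,1\}^L$ obtained by starting from the all-zero array and letting $K$ hash functions each independently select a uniformly random position in $\{1,\dots,L\}$ and set it to $1$ (positions may be selected repeatedly). $H$ denotes Shannon entropy and $h_2(x) = -x\log x - (1-x)\log(1-x)$ is the binary entropy function, with logarithms in the same base as in $H$. *)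

theory Defs
  imports "HOL-Probability.Probability"
begin

text \<open>Bloom filter BF(L,K): positions are 0..L-1; the array is represented by the set
  of positions holding a 1 (position i has bit 1 iff i is in the set).
  Each of the K hash functions independently picks a uniform position and sets it.\<close>
fun bloom_filter :: "nat \<Rightarrow> nat \<Rightarrow> nat set pmf" where
  "bloom_filter L 0 = return_pmf {}"
| "bloom_filter L (Suc k) =
     bind_pmf (bloom_filter L k) (\<lambda>S. map_pmf (\<lambda>i. insert i S) (pmf_of_set {..<L}))"

definition shannon_entropy :: "real \<Rightarrow> 'a pmf \<Rightarrow> real" where
  "shannon_entropy b p = - (\<Sum>x\<in>set_pmf p. pmf p x * log b (pmf p x))"

definition cond_entropy :: "real \<Rightarrow> ('a \<times> 'c) pmf \<Rightarrow> real" where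
  "cond_entropy b p = shannon_entropy b p - shannon_entropy b (map_pmf fst p)"

definition h2 :: "real \<Rightarrow> real \<Rightarrow> real" where
  "h2 b x = - x * log b x - (1 - x) * log b (1 - x)"

end

theory Submission
  imports Defs "HOL-Real_Asymp.Real_Asymp"
begin


lemma set_U: "(L::nat) > 0 \<Longrightarrow> set_pmf (pmf_of_set {..<L}) = {..<L}"
  by (rule set_pmf_of_set) auto

lemma set_bf: "L > 0 \<Longrightarrow> set_pmf (bloom_filter L k) \<subseteq> Pow {..<L}"
  by (induction k) (auto simp: set_U)

lemma fin_bf: "L > 0 \<Longrightarrow> finite (set_pmf (bloom_filter L k))"
  using set_bf by (meson finite_Pow_iff finite_lessThan finite_subset)

lemma integral_bind_pmf_fin:
  fixes g :: "'b \<Rightarrow> real"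
  assumes "finite (set_pmf X)" "finite U" "\<And>S. S \<in> set_pmf X \<Longrightarrow> set_pmf (F S) \<subseteq> U"
  shows "measure_pmf.expectation (bind_pmf X F) g = measure_pmf.expectation X (\<lambda>S. measure_pmf.expectation (F S) g)"
proof -
  have s: "set_pmf (bind_pmf X F) \<subseteq> U" using assms(3) by auto
  have "measure_pmf.expectation (bind_pmf X F) g = (\<Sum>T\<in>U. g T * pmf (bind_pmf X F) T)"
    using s assms(2) by (intro integral_measure_pmf_real) auto
  also have "\<dots> = (\<Sum>T\<in>U. g T * (\<Sum>S\<in>set_pmf X. pmf (F S) T * pmf X S))"
    unfolding pmf_bind using assms(1) by (subst integral_measure_pmf_real[where A="set_pmf X"]) auto
  also have "\<dots> = (\<Sum>S\<in>set_pmf X. (\<Sum>T\<in>U. g T * pmf (F S) T) * pmf X S)"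
    by (simp add: sum_distrib_left sum_distrib_right mult_ac sum.swap[where A=U])
  also have "\<dots> = (\<Sum>S\<in>set_pmf X. measure_pmf.expectation (F S) g * pmf X S)"
    using assms by (intro sum.cong refl arg_cong2[where f=times] integral_measure_pmf_real[symmetric]) auto
  also have "\<dots> = measure_pmf.expectation X (\<lambda>S. measure_pmf.expectation (F S) g)"
    using assms by (intro integral_measure_pmf_real[symmetric]) auto
  finally show ?thesis .
qed

lemma bf_suc_exp:
  fixes g :: "nat set \<Rightarrow> real"
  assumes "L > 0"
  shows "measure_pmf.expectation (bloom_filter L (Suc k)) g =
    measure_pmf.expectation (bloom_filter L k) (\<lambda>S. (\<Sum>i<L. g (insert i S)) / L)"
proof -
  have "measure_pmf.expectation (bloom_filter L (Suc k)) g =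
    measure_pmf.expectation (bloom_filter L k) (\<lambda>S. measure_pmf.expectation (map_pmf (\<lambda>i. insert i S) (pmf_of_set {..<L})) g)"
    unfolding bloom_filter.simps
    by (rule integral_bind_pmf_fin[where U="Pow {..<L}"]) (use assms fin_bf[OF assms] set_bf[OF assms] in \<open>auto simp: set_U\<close>)
  also have "\<dots> = measure_pmf.expectation (bloom_filter L k) (\<lambda>S. (\<Sum>i<L. g (insert i S)) / L)"
  proof -
    have "measure_pmf.expectation (map_pmf (\<lambda>i. insert i S) (pmf_of_set {..<L})) g = (\<Sum>i<L. g (insert i S)) / L" for S
      using integral_pmf_of_set[of "{..<L}" "\<lambda>i. g (insert i S)"] assms by (simp add: lessThan_empty_iff)
    then show ?thesis by simp
  qed
  finally show ?thesis .
qed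

lemma bf_avoid:
  assumes "L > 0" "A \<subseteq> {..<L}"
  shows "measure_pmf.expectation (bloom_filter L k) (\<lambda>S. if S \<inter> A = {} then 1 else 0) = (1 - card A / L) ^ k"
proof (induction k)
  case 0
  then show ?case by simp
next
  case (Suc k)
  have c: "(\<Sum>i<L. (if insert i S \<inter> A = {} then 1 else 0 :: real)) / L = (if S \<inter> A = {} then 1 else 0) * (1 - card A / L)" for S
  proof (cases "S \<inter> A = {}")
    case True
    have "(\<Sum>i<L. (if insert i S \<inter> A = {} then 1 else 0 :: real)) = (\<Sum>i<L. (if i \<notin> A then 1 else 0))"
      using True by (intro sum.cong) auto
    also have "\<dots> = card ({..<L} - A)"
      by (simp add: sum.If_cases Diff_eq Compl_eq)
    also have "\<dots> = L - card A" using assms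
      by (simp add: card_Diff_subset finite_subset of_nat_diff card_mono)
    finally have e: "(\<Sum>i<L. (if insert i S \<inter> A = {} then 1 else 0 :: real)) = real L - card A"
      using assms card_mono[OF _ assms(2)] by simp
    show ?thesis using True assms e by (simp add: field_simps)
  next
    case False
    then show ?thesis by auto
  qed
  show ?case
    by (subst bf_suc_exp[OF assms(1)], subst c) (simp add: Suc)
qed


lemma card_diff_sum:
  assumes "finite Z"
  shows "real (card (Z - S)) = (\<Sum>i\<in>Z. if S \<inter> {i} = {} then 1 else 0)"
proof -
  have "(\<Sum>i\<in>Z. if S \<inter> {i} = {} then 1 else (0::real)) = (\<Sum>i\<in>Z. if i \<notin> S then 1 else 0)"
    by (intro sum.cong) auto
  also have "\<dots> = real (card (Z \<inter> {i. i \<notin> S}))" using assms by (simp add: sum.If_cases)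
  also have "Z \<inter> {i. i \<notin> S} = Z - S" by auto
  finally show ?thesis by simp
qed

lemma bf_mom1:
  assumes "L > 0" "Z \<subseteq> {..<L}"
  shows "measure_pmf.expectation (bloom_filter L k) (\<lambda>S. real (card (Z - S))) = card Z * (1 - 1 / L) ^ k"
proof -
  have fZ: "finite Z" using assms finite_subset by blast
  have int: "integrable (measure_pmf (bloom_filter L k)) f" for f :: "nat set \<Rightarrow> real"
    by (rule integrable_measure_pmf_finite[OF fin_bf[OF assms(1)]])
  have "measure_pmf.expectation (bloom_filter L k) (\<lambda>S. real (card (Z - S))) =
     (\<Sum>i\<in>Z. measure_pmf.expectation (bloom_filter L k) (\<lambda>S. if S \<inter> {i} = {} then 1 else 0))"
    unfolding card_diff_sum[OF fZ] by (rule Bochner_Integration.integral_sum) (rule int)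
  also have "\<dots> = (\<Sum>i\<in>Z. (1 - 1 / L) ^ k)"
    using assms by (intro sum.cong refl) (subst bf_avoid, auto)
  finally show ?thesis by simp
qed

lemma bf_mom2:
  assumes "L > 0" "Z \<subseteq> {..<L}"
  shows "measure_pmf.expectation (bloom_filter L k) (\<lambda>S. (real (card (Z - S)) - card Z * (1 - 1 / L) ^ k)\<^sup>2) \<le> card Z"
proof -
  define q where "q = (1 - 1 / real L) ^ k"
  define X where "X = bloom_filter L k"
  define z where "z = real (card Z)"
  have fZ: "finite Z" using assms finite_subset by blast
  have int: "integrable (measure_pmf X) f" for f :: "nat set \<Rightarrow> real"
    unfolding X_def by (rule integrable_measure_pmf_finite[OF fin_bf[OF assms(1)]])
  have q01: "0 \<le> q" "q \<le> 1" unfolding q_def using assms by (auto intro!: power_le_one)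
  have sq: "(real (card (Z - S)))\<^sup>2 = (\<Sum>i\<in>Z. \<Sum>j\<in>Z. if S \<inter> {i, j} = {} then 1 else 0)" for S
    unfolding card_diff_sum[OF fZ] power2_eq_square sum_product
    by (intro sum.cong refl) auto
  have E2: "measure_pmf.expectation X (\<lambda>S. (real (card (Z - S)))\<^sup>2) \<le> z * q + z * z * q\<^sup>2"
  proof -
    have "measure_pmf.expectation X (\<lambda>S. (real (card (Z - S)))\<^sup>2) =
       (\<Sum>i\<in>Z. \<Sum>j\<in>Z. measure_pmf.expectation X (\<lambda>S. if S \<inter> {i, j} = {} then 1 else 0))"
      unfolding sq
      by (subst Bochner_Integration.integral_sum, rule int, subst Bochner_Integration.integral_sum, rule int, rule refl)
    also have "\<dots> = (\<Sum>i\<in>Z. \<Sum>j\<in>Z. (1 - card {i, j} / L) ^ k)"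
      unfolding X_def using assms by (intro sum.cong refl bf_avoid) auto
    also have "\<dots> \<le> (\<Sum>i\<in>Z. \<Sum>j\<in>Z. q\<^sup>2 + (if i = j then q else 0))"
    proof (intro sum_mono)
      fix i j assume ij: "i \<in> Z" "j \<in> Z"
      show "(1 - card {i, j} / L) ^ k \<le> q\<^sup>2 + (if i = j then q else 0)"
      proof (cases "i = j")
        case True then show ?thesis using q01 by (simp add: q_def)
      next
        case False
        have "i < L" "j < L" using ij assms by auto
        then have L2: "L \<ge> 2" using False by linarith
        have "(1 - card {i, j} / L) ^ k = (1 - 2 / L) ^ k" using False by simp
        also have "\<dots> \<le> ((1 - 1 / L)\<^sup>2) ^ k"
          using L2 by (intro power_mono) (auto simp: power2_eq_square field_simps)
        also have "\<dots> = q\<^sup>2" unfolding q_def by (simp add: power_mult[symmetric] mult.commute)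
        finally show ?thesis using False by simp
      qed
    qed
    also have "\<dots> = z * z * q\<^sup>2 + z * q"
      unfolding z_def by (simp add: sum.distrib fZ algebra_simps)
    finally show ?thesis by simp
  qed
  have E1: "measure_pmf.expectation X (\<lambda>S. real (card (Z - S))) = z * q"
    unfolding X_def z_def q_def by (rule bf_mom1[OF assms])
  have "measure_pmf.expectation X (\<lambda>S. (real (card (Z - S)) - z * q)\<^sup>2) =
     measure_pmf.expectation X (\<lambda>S. (real (card (Z - S)))\<^sup>2) - 2 * (z * q) * measure_pmf.expectation X (\<lambda>S. real (card (Z - S))) + (z * q)\<^sup>2"
    by (simp add: power2_diff Bochner_Integration.integral_diff Bochner_Integration.integral_add int)
  also have "\<dots> \<le> z * q" using E1 E2 by (simp add: power2_eq_square algebra_simps)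
  also have "\<dots> \<le> z" using q01 unfolding z_def by (simp add: mult_left_le)
  finally show ?thesis unfolding X_def z_def q_def .
qed



lemma bf_perm:
  assumes "L > 0" "inj \<sigma>" "\<sigma> ` {..<L} = {..<L}"
  shows "map_pmf (image \<sigma>) (bloom_filter L k) = bloom_filter L k"
proof (induction k)
  case 0
  show ?case by (simp only: bloom_filter.simps map_return_pmf image_empty)
next
  case (Suc k)
  have U: "map_pmf \<sigma> (pmf_of_set {..<L}) = pmf_of_set {..<L}"
  proof -
    have "map_pmf \<sigma> (pmf_of_set {..<L}) = pmf_of_set (\<sigma> ` {..<L})"
      using inj_on_subset[OF assms(2) subset_UNIV] assms(1)
      by (intro map_pmf_of_set_inj) (simp_all add: lessThan_empty_iff)
    then show ?thesis by (simp only: assms(3))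
  qed
  have "map_pmf (image \<sigma>) (bloom_filter L (Suc k)) =
     bind_pmf (bloom_filter L k) (\<lambda>S. map_pmf (\<lambda>i. insert i (\<sigma> ` S)) (map_pmf \<sigma> (pmf_of_set {..<L})))"
    unfolding bloom_filter.simps map_bind_pmf
    by (rule bind_pmf_cong[OF refl]) (simp only: pmf.map_comp o_def image_insert)
  also have "\<dots> = bind_pmf (map_pmf (image \<sigma>) (bloom_filter L k)) (\<lambda>S. map_pmf (\<lambda>i. insert i S) (pmf_of_set {..<L}))"
    by (simp only: U bind_map_pmf)
  also have "\<dots> = bloom_filter L (Suc k)" by (simp only: Suc bloom_filter.simps)
  finally show ?case .
qed

lemma perm_exists:
  assumes "finite Z" "Z \<subseteq> A" "T \<subseteq> Z" "T' \<subseteq> Z" "card T = card T'"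
  shows "\<exists>\<sigma>. inj \<sigma> \<and> \<sigma> ` A = A \<and> \<sigma> ` Z = Z \<and> \<sigma> ` T = T'"
proof -
  have fT: "finite T" "finite T'" using assms finite_subset by blast+
  obtain f where f: "bij_betw f T T'" using finite_same_card_bij[OF fT assms(5)] by blast
  have "card (Z - T) = card (Z - T')" using assms fT by (simp add: card_Diff_subset)
  then obtain g where g: "bij_betw g (Z - T) (Z - T')"
    using finite_same_card_bij[of "Z - T" "Z - T'"] assms by blast
  define \<sigma> where "\<sigma> x = (if x \<in> T then f x else if x \<in> Z then g x else x)" for x
  have b1: "bij_betw \<sigma> T T'" using f unfolding \<sigma>_def by (rule bij_betw_cong[THEN iffD1, rotated]) auto
  have b2: "bij_betw \<sigma> (Z - T) (Z - T')" using g unfolding \<sigma>_def by (rule bij_betw_cong[THEN iffD1, rotated]) auto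
  have b3: "bij_betw \<sigma> (- Z) (- Z)" unfolding \<sigma>_def using assms
    by (intro bij_betw_cong[THEN iffD1, OF _ bij_betw_id]) auto
  have bZ: "bij_betw \<sigma> (T \<union> (Z - T)) (T' \<union> (Z - T'))"
    by (rule bij_betw_combine[OF b1 b2]) auto
  have eZ: "T \<union> (Z - T) = Z" "T' \<union> (Z - T') = Z" using assms by auto
  have bZ': "bij_betw \<sigma> Z Z" using bZ eZ by simp
  have ball: "bij_betw \<sigma> (Z \<union> - Z) (Z \<union> - Z)"
    by (rule bij_betw_combine[OF bZ' b3]) auto
  then have "inj \<sigma>" by (simp add: bij_betw_def)
  moreover have "\<sigma> ` A = A"
  proof -
    have "A = Z \<union> (A - Z)" using assms by auto
    moreover have "\<sigma> ` (A - Z) = id ` (A - Z)"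
      by (rule image_cong) (use assms in \<open>auto simp: \<sigma>_def\<close>)
    moreover have "\<sigma> ` Z = Z" using bZ' bij_betw_imp_surj_on by blast
    ultimately have "\<sigma> ` A = Z \<union> (A - Z)" by (metis image_Un id_apply image_id)
    then show ?thesis using assms by auto
  qed
  moreover have "\<sigma> ` Z = Z" using bZ' bij_betw_imp_surj_on by blast
  moreover have "\<sigma> ` T = T'" using b1 bij_betw_imp_surj_on by blast
  ultimately show ?thesis by blast
qed

lemma bf_sym:
  assumes "L > 0" "Z \<subseteq> {..<L}" "T \<subseteq> Z" "T' \<subseteq> Z" "card T = card T'"
  shows "pmf (map_pmf (\<lambda>S. S \<inter> Z) (bloom_filter L k)) T = pmf (map_pmf (\<lambda>S. S \<inter> Z) (bloom_filter L k)) T'"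
proof -
  have fZ: "finite Z" using assms finite_subset by blast
  obtain \<sigma> where s: "inj \<sigma>" "\<sigma> ` {..<L} = {..<L}" "\<sigma> ` Z = Z" "\<sigma> ` T = T'"
    using perm_exists[OF fZ assms(2-5)] by blast
  define Y where "Y = map_pmf (\<lambda>S. S \<inter> Z) (bloom_filter L k)"
  have "map_pmf (image \<sigma>) Y = map_pmf (\<lambda>S. S \<inter> Z) (map_pmf (image \<sigma>) (bloom_filter L k))"
    unfolding Y_def pmf.map_comp o_def
    by (intro map_pmf_cong refl) (simp add: image_Int[OF s(1)] s(3))
  also have "\<dots> = Y" unfolding Y_def using bf_perm[OF assms(1) s(1,2)] by simp
  finally have Y: "map_pmf (image \<sigma>) Y = Y" .
  have "pmf Y T' = pmf (map_pmf (image \<sigma>) Y) (\<sigma> ` T)" using Y s by simp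
  also have "\<dots> = pmf Y T" by (rule pmf_map_inj') (simp add: inj_on_image s(1))
  finally show ?thesis unfolding Y_def by simp
qed



lemma H_sum:
  assumes "finite A" "set_pmf p \<subseteq> A"
  shows "shannon_entropy b p = - (\<Sum>x\<in>A. pmf p x * log b (pmf p x))"
  unfolding shannon_entropy_def
  using assms by (intro arg_cong[where f=uminus] sum.mono_neutral_left) (auto simp: set_pmf_eq)

lemma H_map_inj:
  assumes "inj_on f (set_pmf p)"
  shows "shannon_entropy b (map_pmf f p) = shannon_entropy b p"
  unfolding shannon_entropy_def set_map_pmf
  using assms by (subst sum.reindex) (auto simp: pmf_map_inj)

lemma H_nonneg:
  assumes "b > 1"
  shows "0 \<le> shannon_entropy b p"
  unfolding shannon_entropy_def
proof -
  have "pmf p x * log b (pmf p x) \<le> 0" if "x \<in> set_pmf p" for x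
  proof -
    have "0 < pmf p x" "pmf p x \<le> 1" using that by (auto simp: set_pmf_eq pmf_le_1 pmf_pos)
    then have "log b (pmf p x) \<le> 0" using assms by simp
    then show ?thesis using \<open>0 < pmf p x\<close> by (simp add: mult_nonneg_nonpos)
  qed
  then show "0 \<le> - (\<Sum>x\<in>set_pmf p. pmf p x * log b (pmf p x))"
    by (simp add: sum_nonpos)
qed

lemma gibbs:
  assumes b: "b > 1" and A: "finite A" "set_pmf p \<subseteq> A"
    and r: "\<And>x. x \<in> A \<Longrightarrow> r x > 0" "(\<Sum>x\<in>A. r x) \<le> 1"
  shows "shannon_entropy b p \<le> (\<Sum>x\<in>A. pmf p x * (- log b (r x)))"
proof -
  have lb: "ln b > 0" using b by simp
  have t: "pmf p x * (log b (r x) - log b (pmf p x)) \<le> (r x - pmf p x) / ln b" if x: "x \<in> A" for x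
  proof (cases "pmf p x = 0")
    case True
    then show ?thesis using r(1)[OF x] lb by simp
  next
    case False
    then have pp: "pmf p x > 0" by (simp add: order_le_neq_trans)
    have "log b (r x) - log b (pmf p x) = ln (r x / pmf p x) / ln b"
      using pp r(1)[OF x] b by (simp add: log_def ln_div diff_divide_distrib)
    also have "\<dots> \<le> (r x / pmf p x - 1) / ln b"
      using ln_le_minus_one[of "r x / pmf p x"] pp r(1)[OF x] lb by (intro divide_right_mono) auto
    finally have "pmf p x * (log b (r x) - log b (pmf p x)) \<le> pmf p x * ((r x / pmf p x - 1) / ln b)"
      using pp by (intro mult_left_mono) auto
    also have "\<dots> = (pmf p x * (r x / pmf p x) - pmf p x) / ln b" by (simp add: right_diff_distrib diff_divide_distrib)
    also have "pmf p x * (r x / pmf p x) = r x" using pp by simp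
    finally have "pmf p x * (log b (r x) - log b (pmf p x)) \<le> (r x - pmf p x) / ln b" .
    then show ?thesis .
  qed
  have "(\<Sum>x\<in>A. pmf p x * (log b (r x) - log b (pmf p x))) \<le> (\<Sum>x\<in>A. (r x - pmf p x) / ln b)"
    by (intro sum_mono t)
  also have "\<dots> = ((\<Sum>x\<in>A. r x) - (\<Sum>x\<in>A. pmf p x)) / ln b"
    by (simp add: sum_divide_distrib[symmetric] sum_subtractf)
  also have "\<dots> \<le> 0" using sum_pmf_eq_1[OF A] r(2) lb by (simp add: divide_nonpos_pos)
  finally have "(\<Sum>x\<in>A. pmf p x * (log b (r x) - log b (pmf p x))) \<le> 0" .
  then show ?thesis unfolding H_sum[OF A]
    by (simp add: right_diff_distrib sum_subtractf sum_negf)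
qed

lemma lower_sym:
  assumes b: "b > 1" and Z: "finite Z" "set_pmf Y \<subseteq> Pow Z"
    and sym: "\<And>T T'. T \<subseteq> Z \<Longrightarrow> T' \<subseteq> Z \<Longrightarrow> card T = card T' \<Longrightarrow> pmf Y T = pmf Y T'"
  shows "(\<Sum>T\<in>Pow Z. pmf Y T * log b (card Z choose card T)) \<le> shannon_entropy b Y"
proof -
  have t: "pmf Y T * log b (card Z choose card T) \<le> - (pmf Y T * log b (pmf Y T))" if T: "T \<in> Pow Z" for T
  proof (cases "pmf Y T = 0")
    case True
    then show ?thesis by simp
  next
    case False
    then have pp: "pmf Y T > 0" by (simp add: order_le_neq_trans)
    define B where "B = {B. B \<subseteq> Z \<and> card B = card T}"
    have cB: "card B = card Z choose card T" unfolding B_def by (rule n_subsets[OF Z(1)])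
    have fB: "finite B" unfolding B_def using Z(1) by auto
    have "(\<Sum>B'\<in>B. pmf Y B') = (\<Sum>B'\<in>B. pmf Y T)"
      using T by (intro sum.cong refl) (auto simp: B_def intro!: sym)
    then have "real (card Z choose card T) * pmf Y T = (\<Sum>B'\<in>B. pmf Y B')"
      by (simp add: cB)
    also have "\<dots> \<le> (\<Sum>B'\<in>Pow Z. pmf Y B')"
      using Z(1) unfolding B_def by (intro sum_mono2) auto
    also have "\<dots> = 1" using sum_pmf_eq_1[of "Pow Z" Y] Z by simp
    finally have le1: "real (card Z choose card T) * pmf Y T \<le> 1" .
    have cpos: "real (card Z choose card T) > 0"
      using T Z(1) by (simp add: card_mono)
    have "log b (card Z choose card T) + log b (pmf Y T) = log b (real (card Z choose card T) * pmf Y T)"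
      using cpos pp b by (simp add: log_mult)
    also have "\<dots> \<le> 0" using le1 cpos pp b by (simp add: log_le_zero_cancel_iff)
    finally have "log b (card Z choose card T) \<le> - log b (pmf Y T)" by simp
    then have "pmf Y T * log b (card Z choose card T) \<le> pmf Y T * (- log b (pmf Y T))"
      using pp by (intro mult_left_mono) auto
    then show ?thesis by simp
  qed
  have "(\<Sum>T\<in>Pow Z. pmf Y T * log b (card Z choose card T)) \<le> (\<Sum>T\<in>Pow Z. - (pmf Y T * log b (pmf Y T)))"
    by (intro sum_mono t)
  also have "\<dots> = shannon_entropy b Y" using Z by (subst H_sum[of "Pow Z"]) (auto simp: sum_negf)
  finally show ?thesis .
qed



lemma chain:
  assumes b: "b > 1" and fP: "finite (set_pmf P)" and fQ: "finite (set_pmf Q)"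
  shows "cond_entropy b (map_pmf (\<lambda>(x, y). (x, f x y)) (pair_pmf P Q)) =
    (\<Sum>a\<in>set_pmf P. pmf P a * shannon_entropy b (map_pmf (f a) Q))"
proof -
  define J where "J = map_pmf (\<lambda>(x, y). (x, f x y)) (pair_pmf P Q)"
  define Y where "Y a = map_pmf (f a) Q" for a
  have Jb: "J = bind_pmf P (\<lambda>x. map_pmf (\<lambda>y. (x, f x y)) Q)"
    unfolding J_def pair_pmf_def map_bind_pmf
    by (intro bind_pmf_cong refl) (simp add: map_pmf_def bind_assoc_pmf bind_return_pmf)
  have pJ: "pmf J (a, c) = pmf P a * pmf (Y a) c" for a c
  proof -
    have "pmf (map_pmf (\<lambda>y. (x, f x y)) Q) (a, c) = (if x = a then pmf (Y a) c else 0)" for x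
      unfolding pmf_map Y_def by (cases "x = a") (auto simp: vimage_def)
    then have "pmf J (a, c) = (\<integral>x. (if x = a then pmf (Y a) c else 0) \<partial>measure_pmf P)"
      unfolding Jb pmf_bind by simp
    also have "\<dots> = (\<Sum>x\<in>{a}. (if x = a then pmf (Y a) c else 0) * pmf P x)"
      by (rule integral_measure_pmf_real) (auto split: if_splits)
    finally show ?thesis by simp
  qed
  have fst: "map_pmf fst J = P"
    unfolding J_def pmf.map_comp by (simp add: o_def case_prod_unfold map_fst_pair_pmf[unfolded map_pmf_def] map_pmf_def)
  define A where "A = Sigma (set_pmf P) (\<lambda>a. set_pmf (Y a))"
  have fY: "finite (set_pmf (Y a))" for a unfolding Y_def using fQ by simp
  have fA: "finite A" unfolding A_def using fP fY by auto
  have sJ: "set_pmf J \<subseteq> A" unfolding J_def A_def Y_def by auto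
  have "shannon_entropy b J = - (\<Sum>(a, c)\<in>A. pmf P a * pmf (Y a) c * log b (pmf P a * pmf (Y a) c))"
    unfolding H_sum[OF fA sJ] by (intro arg_cong[where f=uminus] sum.cong refl) (auto simp: pJ)
  also have "\<dots> = - (\<Sum>a\<in>set_pmf P. \<Sum>c\<in>set_pmf (Y a). pmf P a * pmf (Y a) c * log b (pmf P a * pmf (Y a) c))"
    unfolding A_def using fP fY by (subst sum.Sigma) auto
  also have "\<dots> = - (\<Sum>a\<in>set_pmf P. pmf P a * log b (pmf P a) * (\<Sum>c\<in>set_pmf (Y a). pmf (Y a) c)
        + pmf P a * (\<Sum>c\<in>set_pmf (Y a). pmf (Y a) c * log b (pmf (Y a) c)))"
  proof -
    have "pmf P a * pmf (Y a) c * log b (pmf P a * pmf (Y a) c) =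
        pmf P a * log b (pmf P a) * pmf (Y a) c + pmf P a * (pmf (Y a) c * log b (pmf (Y a) c))"
      if "a \<in> set_pmf P" "c \<in> set_pmf (Y a)" for a c
    proof -
      have "pmf P a > 0" "pmf (Y a) c > 0" using that by (auto simp: pmf_positive)
      then have "log b (pmf P a * pmf (Y a) c) = log b (pmf P a) + log b (pmf (Y a) c)"
        using b by (simp add: log_mult)
      then show ?thesis by (simp add: algebra_simps)
    qed
    then show ?thesis
      by (simp add: sum.distrib sum_distrib_left)
  qed
  also have "\<dots> = shannon_entropy b P + (\<Sum>a\<in>set_pmf P. pmf P a * shannon_entropy b (Y a))"
    using fY by (simp add: sum_pmf_eq_1 shannon_entropy_def sum.distrib sum_negf)
  finally show ?thesis
    unfolding cond_entropy_def J_def[symmetric] fst Y_def by simp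
qed



lemma maxterm:
  fixes z n :: nat
  assumes z: "z > 0" and nz: "n \<le> z"
  defines "x \<equiv> real n / real z"
  shows "(real z + 1) * (real (z choose n) * x ^ n * (1 - x) ^ (z - n)) \<ge> 1"
proof -
  define t where "t k = real (z choose k) * x ^ k * (1 - x) ^ (z - k)" for k
  have x01: "0 \<le> x" "x \<le> 1" unfolding x_def using z nz by auto
  have tnn: "t k \<ge> 0" for k unfolding t_def using x01 by simp
  have sum1: "(\<Sum>k\<le>z. t k) = 1"
    using binomial_ring[of x "1 - x" z] unfolding t_def by (simp add: mult_ac)
  have ratio: "t (Suc k) * ((real k + 1) * (1 - x)) = t k * ((real z - real k) * x)" if "k < z" for k
  proof -
    have c: "real (z choose Suc k) * (k + 1) = real (z choose k) * (z - k)"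
    proof -
      have "(z choose Suc k) * Suc k = (z choose k) * (z - k)"
        using binomial_absorb_comp[of z k] binomial_absorption[of k z] by (simp add: mult.commute)
      then have "real ((z choose Suc k) * Suc k) = real ((z choose k) * (z - k))" by simp
      then show ?thesis using that by (simp add: of_nat_diff algebra_simps)
    qed
    have e: "z - k = Suc (z - Suc k)" using that by simp
    have "t (Suc k) * ((real k + 1) * (1 - x)) = (real (z choose Suc k) * (k + 1)) * x ^ Suc k * (1 - x) ^ (z - Suc k) * (1 - x)"
      unfolding t_def by (simp add: mult_ac)
    also have "\<dots> = real (z choose k) * (z - k) * x ^ Suc k * (1 - x) ^ Suc (z - Suc k)"
      unfolding c by (simp add: mult_ac)
    also have "\<dots> = t k * ((real z - real k) * x)" unfolding t_def e[symmetric] using that by (simp add: mult_ac of_nat_diff)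
    finally show ?thesis .
  qed
  have up: "t k \<le> t (Suc k)" if "k < n" for k
  proof (cases "x = 1")
    case True
    then have "t k = 0" unfolding t_def using that nz by simp
    then show ?thesis using tnn by simp
  next
    case False
    then have x1: "x < 1" using x01 by simp
    have pos: "(real k + 1) * (1 - x) > 0" using x1 by simp
    have "(real k + 1) * (1 - x) \<le> (real z - real k) * x"
    proof -
      have "real z * ((real k + 1) * (1 - x)) = (real k + 1) * (real z - real n)" unfolding x_def using z by (simp add: field_simps)
      also have "\<dots> \<le> (real z - real k) * real n"
      proof -
        have "real z * (real k + 1) \<le> real n * (real z + 1)"
        proof -
          have "real k + 1 \<le> real n" using that by linarith
          then have "real z * (real k + 1) \<le> real z * real n" by (intro mult_left_mono) auto
          also have "\<dots> \<le> real n * (real z + 1)" by (simp add: algebra_simps)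
          finally show ?thesis .
        qed
        then show ?thesis by (simp add: algebra_simps)
      qed
      also have "\<dots> = real z * ((real z - real k) * x)" unfolding x_def using z by (simp add: field_simps)
      finally show ?thesis using z by (simp add: mult_le_cancel_left_pos)
    qed
    then have "t k * ((real k + 1) * (1 - x)) \<le> t (Suc k) * ((real k + 1) * (1 - x))"
      using ratio[of k] that nz tnn[of k] by (simp add: mult_left_mono)
    then show ?thesis using pos by (simp add: mult_le_cancel_right)
  qed
  have down: "t (Suc k) \<le> t k" if "n \<le> k" "k < z" for k
  proof -
    have x1: "x < 1" unfolding x_def using that z by simp
    have pos: "(real k + 1) * (1 - x) > 0" using x1 by simp
    have "(real z - real k) * x \<le> (real k + 1) * (1 - x)"
    proof -
      have "real z * ((real z - real k) * x) = (real z - real k) * real n" unfolding x_def using z that by (simp add: field_simps of_nat_diff)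
      also have "\<dots> \<le> (real k + 1) * (real z - real n)"
      proof -
        have "real n * (real z + 1) \<le> real z * (real k + 1)"
        proof -
          have "real n * (real z + 1) = real n * real z + real n" by (simp add: algebra_simps)
          also have "\<dots> \<le> real k * real z + real z" using that nz
            by (intro add_mono mult_right_mono) auto
          finally show ?thesis by (simp add: algebra_simps)
        qed
        then show ?thesis by (simp add: algebra_simps)
      qed
      also have "\<dots> = real z * ((real k + 1) * (1 - x))" unfolding x_def using z by (simp add: field_simps)
      finally show ?thesis using z by (simp add: mult_le_cancel_left_pos)
    qed
    then have "t (Suc k) * ((real k + 1) * (1 - x)) \<le> t k * ((real k + 1) * (1 - x))"
      using ratio[of k] that tnn[of k] by (simp add: mult_left_mono)
    then show ?thesis using pos by (simp add: mult_le_cancel_right)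
  qed
  have le1: "t (n - j) \<le> t n" if "j \<le> n" for j
    using that
  proof (induction j)
    case 0 then show ?case by simp
  next
    case (Suc j)
    have "t (n - Suc j) \<le> t (Suc (n - Suc j))" using Suc.prems by (intro up) auto
    also have "Suc (n - Suc j) = n - j" using Suc.prems by simp
    finally show ?case using Suc by simp
  qed
  have le2: "t (n + j) \<le> t n" if "n + j \<le> z" for j
    using that
  proof (induction j)
    case 0 then show ?case by simp
  next
    case (Suc j)
    have "t (Suc (n + j)) \<le> t (n + j)" using Suc.prems by (intro down) auto
    then show ?case using Suc by simp
  qed
  have tmax: "t k \<le> t n" if "k \<le> z" for k
  proof (cases "k \<le> n")
    case True then show ?thesis using le1[of "n - k"] by simp
  next
    case False then show ?thesis using le2[of "k - n"] that by simp
  qed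
  have "1 = (\<Sum>k\<le>z. t k)" using sum1 by simp
  also have "\<dots> \<le> (\<Sum>k\<le>z. t n)" by (intro sum_mono tmax) auto
  also have "\<dots> = (real z + 1) * t n" by simp
  finally show ?thesis unfolding t_def by simp
qed


lemma neg_ln_le: "0 < (m::real) \<Longrightarrow> m < 1 \<Longrightarrow> - ln m \<le> (1 - m) / m"
proof -
  assume m: "0 < m" "m < 1"
  have "ln (1 / m) \<le> 1 / m - 1" using m ln_le_minus_one[of "1 / m"] by simp
  then show ?thesis using m by (simp add: ln_div field_simps)
qed

lemma lnC:
  fixes z n :: nat and m :: real
  assumes z: "z > 0" and nz: "n \<le> z" and m: "0 < m" "m < 1"
  shows "- ln (real z + 1) - n * ln m - (real z - n) * ln (1 - m) - (n - z * m)\<^sup>2 / (z * m * (1 - m)) \<le> ln (z choose n)"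
proof -
  have lz: "ln (real z + 1) \<ge> 0" by simp
  consider "n = 0" | "n = z" | "0 < n" "n < z" using nz by linarith
  then show ?thesis
  proof cases
    case 1
    have "(real n - z * m)\<^sup>2 / (z * m * (1 - m)) = z * (m / (1 - m))"
      using 1 z m by (simp add: power2_eq_square field_simps)
    moreover have "- ln (1 - m) \<le> m / (1 - m)" using neg_ln_le[of "1 - m"] m by simp
    then have "- (real z * ln (1 - m)) \<le> z * (m / (1 - m))" using z
      by (metis minus_mult_right mult_left_mono of_nat_0_le_iff)
    ultimately show ?thesis using 1 by simp (insert lz, linarith)
  next
    case 2
    have "(real n - z * m)\<^sup>2 / (z * m * (1 - m)) = z * ((1 - m) / m)"
      using 2 z m by (simp add: power2_eq_square field_simps)
    moreover have "- ln m \<le> (1 - m) / m" using neg_ln_le[of m] m by simp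
    then have "- (real z * ln m) \<le> z * ((1 - m) / m)" using z
      by (metis minus_mult_right mult_left_mono of_nat_0_le_iff)
    ultimately show ?thesis using 2 by simp (insert lz, linarith)
  next
    case 3
    define x where "x = real n / real z"
    have x: "0 < x" "x < 1" unfolding x_def using 3 by auto
    have C: "real (z choose n) > 0" using nz by simp
    have "1 \<le> (real z + 1) * (real (z choose n) * x ^ n * (1 - x) ^ (z - n))"
      unfolding x_def by (rule maxterm[OF z nz])
    then have "0 \<le> ln ((real z + 1) * (real (z choose n) * x ^ n * (1 - x) ^ (z - n)))"
      by simp
    also have "\<dots> = ln (real z + 1) + ln (z choose n) + n * ln x + (real z - n) * ln (1 - x)"
      using x C nz by (simp add: ln_mult ln_realpow of_nat_diff)
    finally have mt: "- ln (real z + 1) - n * ln x - (real z - n) * ln (1 - x) \<le> ln (z choose n)" by simp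
    have d1: "ln x - ln m \<le> x / m - 1"
      using ln_le_minus_one[of "x / m"] x m by (simp add: ln_div)
    have d2: "ln (1 - x) - ln (1 - m) \<le> (1 - x) / (1 - m) - 1"
      using ln_le_minus_one[of "(1 - x) / (1 - m)"] x m by (simp add: ln_div)
    have "n * (ln x - ln m) + (real z - n) * (ln (1 - x) - ln (1 - m)) \<le>
        n * (x / m - 1) + (real z - n) * ((1 - x) / (1 - m) - 1)"
      using d1 d2 nz by (intro add_mono mult_left_mono) auto
    also have "\<dots> = (n - z * m)\<^sup>2 / (z * m * (1 - m))"
      unfolding x_def using z m by (simp add: field_simps power2_eq_square)
    finally have "n * (ln x - ln m) + (real z - n) * (ln (1 - x) - ln (1 - m)) \<le> (n - z * m)\<^sup>2 / (z * m * (1 - m))" .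
    then show ?thesis using mt by (simp add: algebra_simps)
  qed
qed

lemma logC:
  fixes z n :: nat and m b :: real
  assumes b: "b > 1" and z: "z > 0" and nz: "n \<le> z" and m: "0 < m" "m < 1"
  shows "- log b (real z + 1) - n * log b m - (real z - n) * log b (1 - m) - (n - z * m)\<^sup>2 / (z * m * (1 - m) * ln b) \<le> log b (z choose n)"
proof -
  have lb: "ln b > 0" using b by simp
  have "(- ln (real z + 1) - n * ln m - (real z - n) * ln (1 - m) - (n - z * m)\<^sup>2 / (z * m * (1 - m))) / ln b \<le> ln (z choose n) / ln b"
    using lnC[OF z nz m] lb by (intro divide_right_mono) auto
  then show ?thesis using lb by (simp add: log_def diff_divide_distrib)
qed



lemma q_bounds:
  assumes "L \<ge> 2" "k \<ge> 1"
  shows "0 < (1 - 1 / real L) ^ k" "(1 - 1 / real L) ^ k < 1"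
proof -
  have a: "0 < 1 - 1 / real L" "1 - 1 / real L < 1" using assms by auto
  show "0 < (1 - 1 / real L) ^ k" using a by simp
  have "(1 - 1 / real L) ^ k \<le> (1 - 1 / real L) ^ 1" using a assms by (intro power_decreasing) auto
  then show "(1 - 1 / real L) ^ k < 1" using a(2) by (simp only: power_one_right)
qed

lemma exp_affine:
  fixes f :: "'a \<Rightarrow> real"
  assumes "finite (set_pmf p)"
  shows "measure_pmf.expectation p (\<lambda>x. f x * c + d) = measure_pmf.expectation p f * c + d"
proof -
  have i: "integrable (measure_pmf p) g" for g :: "'a \<Rightarrow> real"
    by (rule integrable_measure_pmf_finite[OF assms])
  have "measure_pmf.expectation p (\<lambda>x. f x * c + d) = measure_pmf.expectation p (\<lambda>x. f x * c) + measure_pmf.expectation p (\<lambda>x. d)"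
    by (rule Bochner_Integration.integral_add[OF i i])
  also have "measure_pmf.expectation p (\<lambda>x. f x * c) = measure_pmf.expectation p f * c"
    by (rule integral_mult_left_zero)
  also have "measure_pmf.expectation p (\<lambda>x. d) = d" by simp
  finally show ?thesis .
qed

lemma Y_upper:
  assumes b: "b > 1" and L: "L \<ge> 2" and k: "k \<ge> 1" and Z: "Z \<subseteq> {..<L}"
  shows "shannon_entropy b (map_pmf (\<lambda>S. S \<inter> Z) (bloom_filter L k)) \<le> card Z * h2 b ((1 - 1 / real L) ^ k)"
proof -
  define q where "q = (1 - 1 / real L) ^ k"
  define X where "X = bloom_filter L k"
  define Y where "Y = map_pmf (\<lambda>S. S \<inter> Z) X"
  define z where "z = card Z"
  have L0: "L > 0" using L by simp
  have q: "0 < q" "q < 1" unfolding q_def using q_bounds[OF L k] by auto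
  have fZ: "finite Z" using Z finite_subset by blast
  have sY: "set_pmf Y \<subseteq> Pow Z" unfolding Y_def by auto
  have fX: "finite (set_pmf X)" unfolding X_def by (rule fin_bf[OF L0])
  define r where "r T = (1 - q) ^ card T * q ^ (z - card T)" for T :: "nat set"
  have rpos: "r T > 0" for T unfolding r_def using q by simp
  have rsum: "(\<Sum>T\<in>Pow Z. r T) = 1"
  proof -
    have "(\<Sum>T\<in>Pow Z. r T) = (\<Sum>T\<in>Pow Z. (\<Prod>x\<in>T. 1 - q) * (\<Prod>x\<in>Z - T. q))"
      unfolding r_def z_def using fZ
      by (intro sum.cong refl) (auto simp: card_Diff_subset finite_subset)
    also have "\<dots> = (\<Prod>x\<in>Z. (1 - q) + q)" by (rule prod_add[OF fZ, symmetric])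
    finally show ?thesis by simp
  qed
  have "shannon_entropy b Y \<le> (\<Sum>T\<in>Pow Z. pmf Y T * (- log b (r T)))"
    by (rule gibbs[OF b _ sY]) (use fZ rpos rsum in auto)
  also have "\<dots> = measure_pmf.expectation Y (\<lambda>T. - log b (r T))"
    using fZ sY by (subst integral_measure_pmf_real[where A="Pow Z"]) (auto simp: mult.commute)
  also have "\<dots> = measure_pmf.expectation X (\<lambda>S. - log b (r (S \<inter> Z)))"
    unfolding Y_def by simp
  also have "\<dots> = measure_pmf.expectation X (\<lambda>S. real (card (Z - S)) * (log b (1 - q) - log b q) + - (z * log b (1 - q)))"
  proof (intro Bochner_Integration.integral_cong refl)
    fix S
    have c: "card (S \<inter> Z) + card (Z - S) = z" unfolding z_def using fZ
      by (metis Int_commute card_Int_Diff)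
    have "log b (r (S \<inter> Z)) = card (S \<inter> Z) * log b (1 - q) + (z - card (S \<inter> Z)) * log b q"
      unfolding r_def using q b by (simp add: log_mult log_nat_power)
    also have "z - card (S \<inter> Z) = card (Z - S)" using c by simp
    also have "real (card (S \<inter> Z)) = real z - card (Z - S)" using c by simp
    finally show "- log b (r (S \<inter> Z)) = real (card (Z - S)) * (log b (1 - q) - log b q) + - (z * log b (1 - q))"
      by (simp add: algebra_simps)
  qed
  also have "\<dots> = (z * q) * (log b (1 - q) - log b q) + - (z * log b (1 - q))"
    unfolding exp_affine[OF fX] using bf_mom1[OF L0 Z, of k]
    by (simp add: X_def z_def q_def)
  also have "\<dots> = z * h2 b q" unfolding h2_def by (simp add: algebra_simps)
  finally show ?thesis unfolding Y_def X_def z_def q_def .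
qed


lemma Y_lower:
  assumes b: "b > 1" and L: "L \<ge> 2" and k: "k \<ge> 1" and Z: "Z \<subseteq> {..<L}"
  defines "q \<equiv> (1 - 1 / real L) ^ k"
  shows "card Z * h2 b q - log b (real (card Z) + 1) - 1 / (q * (1 - q) * ln b)
     \<le> shannon_entropy b (map_pmf (\<lambda>S. S \<inter> Z) (bloom_filter L k))"
proof -
  define X where "X = bloom_filter L k"
  define Y where "Y = map_pmf (\<lambda>S. S \<inter> Z) X"
  define z where "z = card Z"
  have L0: "L > 0" using L by simp
  have q: "0 < q" "q < 1" unfolding q_def using q_bounds[OF L k] by auto
  have lb: "ln b > 0" using b by simp
  have C0: "0 < 1 / (q * (1 - q) * ln b)" using q lb by simp
  have fZ: "finite Z" using Z finite_subset by blast
  have sY: "set_pmf Y \<subseteq> Pow Z" unfolding Y_def by auto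
  have fX: "finite (set_pmf X)" unfolding X_def by (rule fin_bf[OF L0])
  have iX: "integrable (measure_pmf X) f" for f :: "nat set \<Rightarrow> real"
    by (rule integrable_measure_pmf_finite[OF fX])
  show ?thesis
  proof (cases "z = 0")
    case True
    have h0: "0 \<le> shannon_entropy b Y" by (rule H_nonneg[OF b])
    show ?thesis using True unfolding z_def[symmetric] Y_def[symmetric] X_def[symmetric]
      by simp (use C0 h0 in linarith)
  next
    case False
    then have z0: "z > 0" by simp
    define W where "W S = real (card (Z - S))" for S
    have cW: "real (card (S \<inter> Z)) = real z - W S" for S
    proof -
      have "card (S \<inter> Z) + card (Z - S) = z" unfolding z_def using fZ
        by (metis Int_commute card_Int_Diff)
      then show ?thesis unfolding W_def by (simp add: algebra_simps)
    qed
    have cle: "card (S \<inter> Z) \<le> z" for S unfolding z_def using fZ by (simp add: card_mono)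
    define lbf where "lbf S = - log b (real z + 1) - (real z - W S) * log b (1 - q) - W S * log b q
        - (W S - z * q)\<^sup>2 / (z * (1 - q) * q * ln b)" for S
    have pt: "lbf S \<le> log b (z choose card (S \<inter> Z))" for S
    proof -
      have "- log b (real z + 1) - card (S \<inter> Z) * log b (1 - q) - (real z - card (S \<inter> Z)) * log b (1 - (1 - q))
          - (card (S \<inter> Z) - z * (1 - q))\<^sup>2 / (z * (1 - q) * (1 - (1 - q)) * ln b) \<le> log b (z choose card (S \<inter> Z))"
        by (rule logC[OF b z0 cle]) (use q in auto)
      moreover have "(real (card (S \<inter> Z)) - z * (1 - q))\<^sup>2 = (W S - z * q)\<^sup>2"
        unfolding cW by (simp add: power2_eq_square algebra_simps)
      ultimately show ?thesis unfolding lbf_def cW by simp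
    qed
    have sym: "pmf Y T = pmf Y T'" if "T \<subseteq> Z" "T' \<subseteq> Z" "card T = card T'" for T T'
      unfolding Y_def X_def by (rule bf_sym[OF L0 Z that])
    have "measure_pmf.expectation X lbf \<le> measure_pmf.expectation X (\<lambda>S. log b (z choose card (S \<inter> Z)))"
      by (intro integral_mono iX pt)
    also have "\<dots> = measure_pmf.expectation Y (\<lambda>T. log b (z choose card T))"
      unfolding Y_def by simp
    also have "\<dots> = (\<Sum>T\<in>Pow Z. pmf Y T * log b (card Z choose card T))"
      using fZ sY by (subst integral_measure_pmf_real[where A="Pow Z"]) (auto simp: mult.commute z_def)
    also have "\<dots> \<le> shannon_entropy b Y"
      by (rule lower_sym[OF b fZ sY sym])
    finally have main: "measure_pmf.expectation X lbf \<le> shannon_entropy b Y" .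
    have E1: "measure_pmf.expectation X W = z * q"
      unfolding W_def X_def z_def q_def by (rule bf_mom1[OF L0 Z])
    have E2: "measure_pmf.expectation X (\<lambda>S. (W S - z * q)\<^sup>2) \<le> z"
      unfolding W_def X_def z_def q_def by (rule bf_mom2[OF L0 Z])
    have "measure_pmf.expectation X lbf = measure_pmf.expectation X
        (\<lambda>S. W S * (log b (1 - q) - log b q) + (- log b (real z + 1) - z * log b (1 - q)))
        - measure_pmf.expectation X (\<lambda>S. (W S - z * q)\<^sup>2) / (z * (1 - q) * q * ln b)"
    proof -
      have "measure_pmf.expectation X lbf = measure_pmf.expectation X
        (\<lambda>S. (W S * (log b (1 - q) - log b q) + (- log b (real z + 1) - z * log b (1 - q)))
        - (W S - z * q)\<^sup>2 / (z * (1 - q) * q * ln b))"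
        unfolding lbf_def by (intro Bochner_Integration.integral_cong refl) (simp add: algebra_simps)
      also have "\<dots> = measure_pmf.expectation X
        (\<lambda>S. W S * (log b (1 - q) - log b q) + (- log b (real z + 1) - z * log b (1 - q)))
        - measure_pmf.expectation X (\<lambda>S. (W S - z * q)\<^sup>2 / (z * (1 - q) * q * ln b))"
        by (rule Bochner_Integration.integral_diff[OF iX iX])
      also have "measure_pmf.expectation X (\<lambda>S. (W S - z * q)\<^sup>2 / (z * (1 - q) * q * ln b))
          = measure_pmf.expectation X (\<lambda>S. (W S - z * q)\<^sup>2) / (z * (1 - q) * q * ln b)"
        by (rule integral_divide_zero)
      finally show ?thesis .
    qed
    also have "measure_pmf.expectation X
        (\<lambda>S. W S * (log b (1 - q) - log b q) + (- log b (real z + 1) - z * log b (1 - q)))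
        = z * q * (log b (1 - q) - log b q) + (- log b (real z + 1) - z * log b (1 - q))"
      unfolding exp_affine[OF fX] E1 ..
    finally have e: "measure_pmf.expectation X lbf = z * h2 b q - log b (real z + 1)
        - measure_pmf.expectation X (\<lambda>S. (W S - z * q)\<^sup>2) / (z * (1 - q) * q * ln b)"
      unfolding h2_def by (simp add: algebra_simps)
    have "measure_pmf.expectation X (\<lambda>S. (W S - z * q)\<^sup>2) / (z * (1 - q) * q * ln b) \<le> z / (z * (1 - q) * q * ln b)"
      using E2 q lb z0 by (intro divide_right_mono) auto
    also have "\<dots> = 1 / (q * (1 - q) * ln b)"
    proof -
      have "real z * (1 - q) * q * ln b = real z * (q * (1 - q) * ln b)" by (simp add: mult_ac)
      then show ?thesis using z0 by simp
    qed
    finally have "z * h2 b q - log b (real z + 1) - 1 / (q * (1 - q) * ln b) \<le> measure_pmf.expectation X lbf"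
      unfolding e by simp
    then show ?thesis using main unfolding Y_def z_def X_def by simp
  qed
qed



lemma part1_bounds:
  assumes b: "b > 1" and L: "L \<ge> 2" and k: "k \<ge> 1"
  defines "q \<equiv> (1 - 1 / real L) ^ k"
  shows "L * h2 b q - log b (real L + 1) - 1 / (q * (1 - q) * ln b) \<le> shannon_entropy b (bloom_filter L k)"
    and "shannon_entropy b (bloom_filter L k) \<le> L * h2 b q"
proof -
  have L0: "L > 0" using L by simp
  have e: "map_pmf (\<lambda>S. S \<inter> {..<L}) (bloom_filter L k) = bloom_filter L k"
  proof -
    have "map_pmf (\<lambda>S. S \<inter> {..<L}) (bloom_filter L k) = map_pmf id (bloom_filter L k)"
      using set_bf[OF L0, of k] by (intro map_pmf_cong refl) auto
    then show ?thesis by simp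
  qed
  show "L * h2 b q - log b (real L + 1) - 1 / (q * (1 - q) * ln b) \<le> shannon_entropy b (bloom_filter L k)"
    using Y_lower[OF b L k order_refl] unfolding e q_def by simp
  show "shannon_entropy b (bloom_filter L k) \<le> L * h2 b q"
    using Y_upper[OF b L k order_refl] unfolding e q_def by simp
qed

lemma exp_sum_set:
  fixes g :: "'a \<Rightarrow> real"
  assumes "finite (set_pmf p)"
  shows "(\<Sum>S\<in>set_pmf p. pmf p S * g S) = measure_pmf.expectation p g"
  using assms by (subst integral_measure_pmf_real[where A="set_pmf p"]) (auto simp: mult.commute)

lemma part2_bounds:
  assumes b: "b > 1" and L: "L \<ge> 2" and k1: "k1 \<ge> 1" and k2: "k2 \<ge> 1"
  defines "q1 \<equiv> (1 - 1 / real L) ^ k1" and "q2 \<equiv> (1 - 1 / real L) ^ k2"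
  defines "CE \<equiv> cond_entropy b (map_pmf (\<lambda>(x1, x2). (x1, x1 \<union> x2))
                   (pair_pmf (bloom_filter L k1) (bloom_filter L k2)))"
  shows "L * q1 * h2 b q2 - log b (real L + 1) - 1 / (q2 * (1 - q2) * ln b) \<le> CE"
    and "CE \<le> L * q1 * h2 b q2"
proof -
  define X1 where "X1 = bloom_filter L k1"
  define X2 where "X2 = bloom_filter L k2"
  define C where "C = 1 / (q2 * (1 - q2) * ln b)"
  define H where "H S = shannon_entropy b (map_pmf ((\<union>) S) X2)" for S
  define cz where "cz S = real (card ({..<L} - S))" for S
  have L0: "L > 0" using L by simp
  have f1: "finite (set_pmf X1)" unfolding X1_def by (rule fin_bf[OF L0])
  have f2: "finite (set_pmf X2)" unfolding X2_def by (rule fin_bf[OF L0])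
  have CE: "CE = (\<Sum>S\<in>set_pmf X1. pmf X1 S * H S)"
    unfolding CE_def H_def X1_def X2_def using chain[OF b f1[unfolded X1_def] f2[unfolded X2_def], of "(\<union>)"]
    by simp
  have HS: "cz S * h2 b q2 - log b (real L + 1) - C \<le> H S \<and> H S \<le> cz S * h2 b q2" if S: "S \<in> set_pmf X1" for S
  proof -
    have SL: "S \<subseteq> {..<L}" using S set_bf[OF L0, of k1] unfolding X1_def by auto
    define Z where "Z = {..<L} - S"
    have ZL: "Z \<subseteq> {..<L}" unfolding Z_def by auto
    have "map_pmf ((\<union>) S) X2 = map_pmf ((\<union>) S) (map_pmf (\<lambda>x. x \<inter> Z) X2)"
      unfolding pmf.map_comp o_def
      using set_bf[OF L0, of k2] unfolding X2_def Z_def by (intro map_pmf_cong refl) auto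
    then have "H S = shannon_entropy b (map_pmf (\<lambda>x. x \<inter> Z) X2)"
      unfolding H_def by (simp add: H_map_inj inj_on_def Z_def) (rule H_map_inj, auto simp: inj_on_def)
    moreover have "cz S = real (card Z)" unfolding cz_def Z_def ..
    moreover have "log b (real (card Z) + 1) \<le> log b (real L + 1)"
      using b card_mono[OF _ ZL] by simp
    ultimately show ?thesis
      using Y_lower[OF b L k2 ZL] Y_upper[OF b L k2 ZL] unfolding X2_def C_def q2_def by auto
  qed
  have Ecz: "measure_pmf.expectation X1 cz = L * q1"
    using bf_mom1[OF L0 order_refl, of k1] unfolding cz_def X1_def q1_def by simp
  have s1: "(\<Sum>S\<in>set_pmf X1. pmf X1 S) = 1" by (rule sum_pmf_eq_1[OF f1 order_refl])
  have "(\<Sum>S\<in>set_pmf X1. pmf X1 S * (cz S * h2 b q2 - log b (real L + 1) - C)) \<le> CE"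
    unfolding CE using HS by (intro sum_mono mult_left_mono) auto
  moreover have "(\<Sum>S\<in>set_pmf X1. pmf X1 S * (cz S * h2 b q2 - log b (real L + 1) - C))
     = (\<Sum>S\<in>set_pmf X1. pmf X1 S * cz S) * h2 b q2 - (log b (real L + 1) + C) * (\<Sum>S\<in>set_pmf X1. pmf X1 S)"
    by (simp add: algebra_simps sum_distrib_left sum_distrib_right sum_subtractf sum.distrib)
  ultimately show "L * q1 * h2 b q2 - log b (real L + 1) - 1 / (q2 * (1 - q2) * ln b) \<le> CE"
    using s1 Ecz exp_sum_set[OF f1, of cz] unfolding C_def by simp
  have "CE \<le> (\<Sum>S\<in>set_pmf X1. pmf X1 S * (cz S * h2 b q2))"
    unfolding CE using HS by (intro sum_mono mult_left_mono) auto
  also have "\<dots> = (\<Sum>S\<in>set_pmf X1. pmf X1 S * cz S) * h2 b q2"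
    by (simp add: sum_distrib_left mult_ac)
  finally show "CE \<le> L * q1 * h2 b q2"
    using Ecz exp_sum_set[OF f1, of cz] by simp
qed



lemma qlim:
  fixes K :: "nat \<Rightarrow> nat"
  assumes "(\<lambda>L. real (K L) / real L) \<longlonglongrightarrow> \<kappa>"
  shows "(\<lambda>L. (1 - 1 / real L) ^ K L) \<longlonglongrightarrow> exp (- \<kappa>)"
proof -
  have l1: "(\<lambda>L. real L * ln (1 - 1 / real L)) \<longlonglongrightarrow> -1" by real_asymp
  have "(\<lambda>L. exp (real (K L) / real L * (real L * ln (1 - 1 / real L)))) \<longlonglongrightarrow> exp (\<kappa> * -1)"
    by (intro tendsto_exp tendsto_mult assms l1)
  moreover have "\<forall>\<^sub>F L in sequentially. exp (real (K L) / real L * (real L * ln (1 - 1 / real L))) = (1 - 1 / real L) ^ K L"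
    using eventually_ge_at_top[of "2::nat"]
  proof eventually_elim
    case (elim L)
    then have p: "0 < 1 - 1 / real L" by simp
    have "real (K L) / real L * (real L * ln (1 - 1 / real L)) = real (K L) * ln (1 - 1 / real L)"
      using elim by simp
    also have "\<dots> = ln ((1 - 1 / real L) ^ K L)" using p by (simp add: ln_realpow)
    finally show ?case using p by simp
  qed
  ultimately show ?thesis by (simp add: tendsto_cong)
qed

lemma err_lim:
  fixes c :: "nat \<Rightarrow> real"
  assumes "c \<longlonglongrightarrow> c0"
  shows "(\<lambda>L. (log b (real L + 1) + c L) / real L) \<longlonglongrightarrow> 0"
proof -
  have a: "(\<lambda>L. ln (real L + 1) / real L) \<longlonglongrightarrow> 0" by real_asymp
  have d: "(\<lambda>L::nat. 1 / real L) \<longlonglongrightarrow> 0" by real_asymp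
  have "(\<lambda>L. ln (real L + 1) / real L * (1 / ln b) + c L * (1 / real L)) \<longlonglongrightarrow> 0 * (1 / ln b) + c0 * 0"
    by (intro tendsto_intros a d assms)
  then show ?thesis by (simp add: log_def add_divide_distrib mult.commute)
qed

lemma squeeze:
  fixes F a e :: "nat \<Rightarrow> real"
  assumes ev: "\<forall>\<^sub>F L in sequentially. a L * real L - e L \<le> F L \<and> F L \<le> a L * real L"
    and al: "a \<longlonglongrightarrow> l" and el: "(\<lambda>L. e L / real L) \<longlonglongrightarrow> 0"
  shows "(\<lambda>L. F L / real L) \<longlonglongrightarrow> l"
proof (rule tendsto_sandwich)
  show "\<forall>\<^sub>F L in sequentially. a L - e L / real L \<le> F L / real L"
    using ev eventually_ge_at_top[of "1::nat"]
  proof eventually_elim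
    case (elim L)
    then have "(a L * real L - e L) / real L \<le> F L / real L" by (intro divide_right_mono) auto
    then show ?case using elim by (simp add: diff_divide_distrib)
  qed
  show "\<forall>\<^sub>F L in sequentially. F L / real L \<le> a L"
    using ev eventually_ge_at_top[of "1::nat"]
  proof eventually_elim
    case (elim L)
    then have "F L / real L \<le> (a L * real L) / real L" by (intro divide_right_mono) auto
    then show ?case using elim by simp
  qed
  show "(\<lambda>L. a L - e L / real L) \<longlonglongrightarrow> l" using tendsto_diff[OF al el] by simp
  show "a \<longlonglongrightarrow> l" by (rule al)
qed

lemma h2_lim:
  fixes q :: "nat \<Rightarrow> real"
  assumes "q \<longlonglongrightarrow> e" "0 < e" "e < 1" "b > 1"
  shows "(\<lambda>L. h2 b (q L)) \<longlonglongrightarrow> h2 b e"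
  unfolding h2_def using assms by (intro tendsto_intros) auto

lemma C_lim:
  fixes q :: "nat \<Rightarrow> real"
  assumes "q \<longlonglongrightarrow> e" "0 < e" "e < 1" "b > 1"
  shows "(\<lambda>L. 1 / (q L * (1 - q L) * ln b)) \<longlonglongrightarrow> 1 / (e * (1 - e) * ln b)"
  using assms by (intro tendsto_intros) auto



theorem lemma4:
  fixes b :: real
  assumes "b > 1"
  shows
   "(\<forall>(K :: nat \<Rightarrow> nat) (\<kappa> :: real).
       (\<forall>L. K L > 0) \<and> \<kappa> > 0 \<and> ((\<lambda>L. real (K L) / real L) \<longlonglongrightarrow> \<kappa>) \<longrightarrow>
       ((\<lambda>L. shannon_entropy b (bloom_filter L (K L)) / real L) \<longlonglongrightarrow> h2 b (exp (- \<kappa>))))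
    \<and>
    (\<forall>(K1 :: nat \<Rightarrow> nat) (K2 :: nat \<Rightarrow> nat) (\<kappa>1 :: real) (\<kappa>2 :: real).
       (\<forall>L. K1 L > 0) \<and> (\<forall>L. K2 L > 0) \<and> \<kappa>1 > 0 \<and> \<kappa>2 > 0 \<and>
       ((\<lambda>L. real (K1 L) / real L) \<longlonglongrightarrow> \<kappa>1) \<and>
       ((\<lambda>L. real (K2 L) / real L) \<longlonglongrightarrow> \<kappa>2) \<longrightarrow>
       ((\<lambda>L. cond_entropy b
                (map_pmf (\<lambda>(x1, x2). (x1, x1 \<union> x2))
                   (pair_pmf (bloom_filter L (K1 L)) (bloom_filter L (K2 L)))) / real L)
          \<longlonglongrightarrow> exp (- \<kappa>1) * h2 b (exp (- \<kappa>2))))"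
proof (intro conjI allI impI; elim conjE)
  fix K :: "nat \<Rightarrow> nat" and \<kappa> :: real
  assume K: "\<forall>L. K L > 0" and kp: "\<kappa> > 0" and lim: "(\<lambda>L. real (K L) / real L) \<longlonglongrightarrow> \<kappa>"
  define q where "q L = (1 - 1 / real L) ^ K L" for L
  have ql: "q \<longlonglongrightarrow> exp (- \<kappa>)" unfolding q_def by (rule qlim[OF lim])
  have e: "0 < exp (- \<kappa>)" "exp (- \<kappa>) < 1" using kp by auto
  show "(\<lambda>L. shannon_entropy b (bloom_filter L (K L)) / real L) \<longlonglongrightarrow> h2 b (exp (- \<kappa>))"
  proof (rule squeeze[where a="\<lambda>L. h2 b (q L)" and e="\<lambda>L. log b (real L + 1) + 1 / (q L * (1 - q L) * ln b)"])
    show "\<forall>\<^sub>F L in sequentially. h2 b (q L) * real L - (log b (real L + 1) + 1 / (q L * (1 - q L) * ln b))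
        \<le> shannon_entropy b (bloom_filter L (K L)) \<and> shannon_entropy b (bloom_filter L (K L)) \<le> h2 b (q L) * real L"
      using eventually_ge_at_top[of "2::nat"]
    proof eventually_elim
      case (elim L)
      have k: "K L \<ge> 1" using K by (simp add: Suc_le_eq)
      show ?case using part1_bounds[OF assms elim k] unfolding q_def by (simp add: algebra_simps)
    qed
    show "(\<lambda>L. h2 b (q L)) \<longlonglongrightarrow> h2 b (exp (- \<kappa>))" by (rule h2_lim[OF ql e assms])
    show "(\<lambda>L. (log b (real L + 1) + 1 / (q L * (1 - q L) * ln b)) / real L) \<longlonglongrightarrow> 0"
      by (rule err_lim[OF C_lim[OF ql e assms]])
  qed
next
  fix K1 K2 :: "nat \<Rightarrow> nat" and \<kappa>1 \<kappa>2 :: real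
  assume K1: "\<forall>L. K1 L > 0" and K2: "\<forall>L. K2 L > 0" and kp1: "\<kappa>1 > 0" and kp2: "\<kappa>2 > 0"
    and lim1: "(\<lambda>L. real (K1 L) / real L) \<longlonglongrightarrow> \<kappa>1" and lim2: "(\<lambda>L. real (K2 L) / real L) \<longlonglongrightarrow> \<kappa>2"
  define q1 where "q1 L = (1 - 1 / real L) ^ K1 L" for L
  define q2 where "q2 L = (1 - 1 / real L) ^ K2 L" for L
  have ql1: "q1 \<longlonglongrightarrow> exp (- \<kappa>1)" unfolding q1_def by (rule qlim[OF lim1])
  have ql2: "q2 \<longlonglongrightarrow> exp (- \<kappa>2)" unfolding q2_def by (rule qlim[OF lim2])
  have e2: "0 < exp (- \<kappa>2)" "exp (- \<kappa>2) < 1" using kp2 by auto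
  show "(\<lambda>L. cond_entropy b
                (map_pmf (\<lambda>(x1, x2). (x1, x1 \<union> x2))
                   (pair_pmf (bloom_filter L (K1 L)) (bloom_filter L (K2 L)))) / real L)
          \<longlonglongrightarrow> exp (- \<kappa>1) * h2 b (exp (- \<kappa>2))"
  proof (rule squeeze[where a="\<lambda>L. q1 L * h2 b (q2 L)" and e="\<lambda>L. log b (real L + 1) + 1 / (q2 L * (1 - q2 L) * ln b)"])
    show "\<forall>\<^sub>F L in sequentially. q1 L * h2 b (q2 L) * real L - (log b (real L + 1) + 1 / (q2 L * (1 - q2 L) * ln b))
        \<le> cond_entropy b (map_pmf (\<lambda>(x1, x2). (x1, x1 \<union> x2)) (pair_pmf (bloom_filter L (K1 L)) (bloom_filter L (K2 L))))
        \<and> cond_entropy b (map_pmf (\<lambda>(x1, x2). (x1, x1 \<union> x2)) (pair_pmf (bloom_filter L (K1 L)) (bloom_filter L (K2 L))))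
        \<le> q1 L * h2 b (q2 L) * real L"
      using eventually_ge_at_top[of "2::nat"]
    proof eventually_elim
      case (elim L)
      have k1: "K1 L \<ge> 1" using K1 by (simp add: Suc_le_eq)
      have k2: "K2 L \<ge> 1" using K2 by (simp add: Suc_le_eq)
      show ?case using part2_bounds[OF assms elim k1 k2] unfolding q1_def q2_def by (simp add: algebra_simps)
    qed
    show "(\<lambda>L. q1 L * h2 b (q2 L)) \<longlonglongrightarrow> exp (- \<kappa>1) * h2 b (exp (- \<kappa>2))"
      by (intro tendsto_mult ql1 h2_lim[OF ql2 e2 assms])
    show "(\<lambda>L. (log b (real L + 1) + 1 / (q2 L * (1 - q2 L) * ln b)) / real L) \<longlonglongrightarrow> 0"
      by (rule err_lim[OF C_lim[OF ql2 e2 assms]])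
  qed
qed

end
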